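(* Let $G$ be a locally precompact, sequentially complete topological group. Then every closed zero-dimensional metrizable subgroup of $G$ is discrete if and only if every compact metrizable zero-dimensional subgroup of $G$ is finite. In particular, these two conditions are equivalent for every locally countably compact topological group.
   Context: All topological groups are Hausdorff. A topological group is locally precompact if its completion with respect to the two-sided uniformity is locally compact; it is sequentially complete if every Cauchy sequence with respect to the two-sided uniformity converges in $G$; it is locally countably compact if some open neighbourhood of the identity has countably compact closure. A space is zero-dimensional if it has a base of clopen sets. *)

theory Defs
  imports "HOL-Analysis.Analysis" "HOL-Algebra.Group"
begin

definition topological_group :: "('a, 'b) monoid_scheme \<Rightarrow> 'a topology \<Rightarrow> bool" where
  "topological_group G T \<longleftrightarrow>
     group G \<and> topspace T = carrier G \<and> Hausdorff_space T \<and>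
     continuous_map (prod_topology T T) T (\<lambda>(x, y). x \<otimes>\<^bsub>G\<^esub> y) \<and>
     continuous_map T T (\<lambda>x. inv\<^bsub>G\<^esub> x)"

text \<open>Basic entourage ball of the two-sided uniformity determined by a neighbourhood V of 1:
  y is V-close to x iff x^-1 y \<in> V and y x^-1 \<in> V.\<close>
definition two_sided_ball :: "('a, 'b) monoid_scheme \<Rightarrow> 'a set \<Rightarrow> 'a \<Rightarrow> 'a set" where
  "two_sided_ball G V x =
     {y \<in> carrier G. inv\<^bsub>G\<^esub> x \<otimes>\<^bsub>G\<^esub> y \<in> V \<and> y \<otimes>\<^bsub>G\<^esub> inv\<^bsub>G\<^esub> x \<in> V}"

definition precompact_in :: "('a, 'b) monoid_scheme \<Rightarrow> 'a topology \<Rightarrow> 'a set \<Rightarrow> bool" where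
  "precompact_in G T A \<longleftrightarrow>
     A \<subseteq> carrier G \<and>
     (\<forall>V. openin T V \<and> \<one>\<^bsub>G\<^esub> \<in> V \<longrightarrow>
        (\<exists>F. finite F \<and> F \<subseteq> carrier G \<and> A \<subseteq> (\<Union>f\<in>F. two_sided_ball G V f)))"

text \<open>Locally precompact: some neighbourhood of the identity is precompact
  (equivalently, the two-sided (Raikov) completion is locally compact).\<close>
definition locally_precompact :: "('a, 'b) monoid_scheme \<Rightarrow> 'a topology \<Rightarrow> bool" where
  "locally_precompact G T \<longleftrightarrow>
     (\<exists>U. openin T U \<and> \<one>\<^bsub>G\<^esub> \<in> U \<and> precompact_in G T U)"

definition two_sided_cauchy :: "('a, 'b) monoid_scheme \<Rightarrow> 'a topology \<Rightarrow> (nat \<Rightarrow> 'a) \<Rightarrow> bool" where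
  "two_sided_cauchy G T x \<longleftrightarrow>
     (\<forall>n. x n \<in> carrier G) \<and>
     (\<forall>V. openin T V \<and> \<one>\<^bsub>G\<^esub> \<in> V \<longrightarrow>
        (\<exists>N. \<forall>m\<ge>N. \<forall>n\<ge>N. x n \<in> two_sided_ball G V (x m)))"

definition sequentially_complete :: "('a, 'b) monoid_scheme \<Rightarrow> 'a topology \<Rightarrow> bool" where
  "sequentially_complete G T \<longleftrightarrow>
     (\<forall>x. two_sided_cauchy G T x \<longrightarrow> (\<exists>l. limitin T x l sequentially))"

definition countably_compactin :: "'a topology \<Rightarrow> 'a set \<Rightarrow> bool" where
  "countably_compactin X S \<longleftrightarrow>
     S \<subseteq> topspace X \<and>
     (\<forall>\<U>. countable \<U> \<and> (\<forall>U\<in>\<U>. openin X U) \<and> S \<subseteq> \<Union>\<U>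
          \<longrightarrow> (\<exists>\<F>. finite \<F> \<and> \<F> \<subseteq> \<U> \<and> S \<subseteq> \<Union>\<F>))"

definition locally_countably_compact :: "('a, 'b) monoid_scheme \<Rightarrow> 'a topology \<Rightarrow> bool" where
  "locally_countably_compact G T \<longleftrightarrow>
     (\<exists>U. openin T U \<and> \<one>\<^bsub>G\<^esub> \<in> U \<and> countably_compactin T (T closure_of U))"

definition zero_dimensional :: "'a topology \<Rightarrow> bool" where
  "zero_dimensional X \<longleftrightarrow>
     (\<forall>U x. openin X U \<and> x \<in> U \<longrightarrow>
        (\<exists>V. openin X V \<and> closedin X V \<and> x \<in> V \<and> V \<subseteq> U))"

definition closed_zd_metrizable_subgroups_discrete :: "('a, 'b) monoid_scheme \<Rightarrow> 'a topology \<Rightarrow> bool" where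
  "closed_zd_metrizable_subgroups_discrete G T \<longleftrightarrow>
     (\<forall>H. subgroup H G \<and> closedin T H \<and> zero_dimensional (subtopology T H) \<and>
          metrizable_space (subtopology T H)
        \<longrightarrow> subtopology T H = discrete_topology H)"

definition compact_zd_metrizable_subgroups_finite :: "('a, 'b) monoid_scheme \<Rightarrow> 'a topology \<Rightarrow> bool" where
  "compact_zd_metrizable_subgroups_finite G T \<longleftrightarrow>
     (\<forall>H. subgroup H G \<and> compactin T H \<and> zero_dimensional (subtopology T H) \<and>
          metrizable_space (subtopology T H)
        \<longrightarrow> finite H)"

end

theory Submission
  imports Defs "HOL-Library.Diagonal_Subsequence"
begin

lemma tg_left_cont:
  assumes tg: "topological_group G T" and a: "a \<in> carrier G"
  shows "continuous_map T T (\<lambda>y. a \<otimes>\<^bsub>G\<^esub> y)"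
proof -
  have top: "topspace T = carrier G" using tg by (simp add: topological_group_def)
  have "continuous_map T (prod_topology T T) (\<lambda>y. (a, y))"
    using a top by (simp add: continuous_map_paired)
  then have "continuous_map T T ((\<lambda>(x, y). x \<otimes>\<^bsub>G\<^esub> y) \<circ> (\<lambda>y. (a, y)))"
    using continuous_map_compose tg unfolding topological_group_def by blast
  then show ?thesis by (simp add: o_def)
qed

lemma tg_transl_open:
  assumes tg: "topological_group G T" and a: "a \<in> carrier G" and Q: "openin T Q"
  shows "openin T {y \<in> topspace T. a \<otimes>\<^bsub>G\<^esub> y \<in> Q}"
  using openin_continuous_map_preimage[OF tg_left_cont[OF tg a] Q] .


lemma zd_subtopology:
  assumes zd: "zero_dimensional X"
  shows "zero_dimensional (subtopology X S)"
  unfolding zero_dimensional_def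
proof (intro allI impI)
  fix U x assume Ux: "openin (subtopology X S) U \<and> x \<in> U"
  then obtain Q where Q: "openin X Q" "U = Q \<inter> S" by (auto simp: openin_subtopology)
  have x: "x \<in> Q" "x \<in> S" using Ux Q by auto
  obtain V where V: "openin X V" "closedin X V" "x \<in> V" "V \<subseteq> Q"
    using zd Q(1) x(1) unfolding zero_dimensional_def by blast
  have "openin (subtopology X S) (V \<inter> S)" using V(1) by (auto simp: openin_subtopology)
  moreover have "closedin (subtopology X S) (V \<inter> S)" using V(2) by (auto simp: closedin_subtopology)
  moreover have "x \<in> V \<inter> S" "V \<inter> S \<subseteq> U" using V x Q by auto
  ultimately show "\<exists>V. openin (subtopology X S) V \<and> closedin (subtopology X S) V \<and> x \<in> V \<and> V \<subseteq> U"
    by blast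
qed

lemma easy_dir:
  assumes tg: "topological_group G T" and disc: "closed_zd_metrizable_subgroups_discrete G T"
  shows "compact_zd_metrizable_subgroups_finite G T"
  unfolding compact_zd_metrizable_subgroups_finite_def
proof (intro allI impI)
  fix H assume H: "subgroup H G \<and> compactin T H \<and> zero_dimensional (subtopology T H) \<and> metrizable_space (subtopology T H)"
  have "Hausdorff_space T" using tg by (simp add: topological_group_def)
  then have "closedin T H" using H compactin_imp_closedin by blast
  then have eq: "subtopology T H = discrete_topology H"
    using disc H unfolding closed_zd_metrizable_subgroups_discrete_def by blast
  have "compactin (subtopology T H) H" using H by (simp add: compactin_subtopology)
  then show "finite H" unfolding eq by (simp add: compactin_discrete_topology)
qed

lemma cc_closed_subset:
  assumes cc: "countably_compactin X C" and Wcl: "closedin X W" and WC: "W \<subseteq> C"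
  shows "countably_compactin X W"
  unfolding countably_compactin_def
proof (intro conjI allI impI)
  show "W \<subseteq> topspace X" using Wcl closedin_subset by blast
  fix \<U> assume U: "countable \<U> \<and> (\<forall>U\<in>\<U>. openin X U) \<and> W \<subseteq> \<Union>\<U>"
  let ?V = "insert (topspace X - W) \<U>"
  have Ctop: "C \<subseteq> topspace X" using cc by (simp add: countably_compactin_def)
  have "countable ?V" using U by simp
  moreover have "\<forall>U\<in>?V. openin X U" using U Wcl by (auto simp: closedin_def)
  moreover have "C \<subseteq> \<Union>?V" using U Ctop by blast
  ultimately have C3: "countable ?V \<and> (\<forall>U\<in>?V. openin X U) \<and> C \<subseteq> \<Union>?V" by blast
  obtain F where F: "finite F" "F \<subseteq> ?V" "C \<subseteq> \<Union>F"
    using cc[unfolded countably_compactin_def, THEN conjunct2, rule_format, OF C3] by blast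
  show "\<exists>F. finite F \<and> F \<subseteq> \<U> \<and> W \<subseteq> \<Union>F"
  proof (intro exI conjI)
    show "finite (F - {topspace X - W})" using F by simp
    show "F - {topspace X - W} \<subseteq> \<U>" using F by blast
    show "W \<subseteq> \<Union>(F - {topspace X - W})" using F WC by blast
  qed
qed

lemma cc_BW:
  assumes cc: "countably_compactin X S" and TS: "T \<subseteq> S" and inf: "infinite T"
  shows "S \<inter> X derived_set_of T \<noteq> {}"
proof
  assume empty: "S \<inter> X derived_set_of T = {}"
  obtain D where D: "D \<subseteq> T" "countable D" "infinite D" using infinite_countable_subset'[OF inf] by blast
  have Stop: "S \<subseteq> topspace X" using cc by (simp add: countably_compactin_def)
  have DS: "D \<subseteq> S" using D TS by blast
  have "\<exists>U. openin X U \<and> x \<in> U \<and> U \<inter> D \<subseteq> {x}" if x: "x \<in> S" for x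
  proof -
    have "x \<notin> X derived_set_of D" using empty derived_set_of_mono[OF D(1), of X] x by blast
    then show ?thesis using Stop x unfolding in_derived_set_of by blast
  qed
  then obtain U where U: "\<And>x. x \<in> S \<Longrightarrow> openin X (U x) \<and> x \<in> U x \<and> U x \<inter> D \<subseteq> {x}" by metis
  define Q where "Q = \<Union>(U ` (S - D))"
  have Qo: "openin X Q" unfolding Q_def using U by (intro openin_Union) auto
  have QD: "Q \<inter> D = {}" unfolding Q_def using U by fastforce
  let ?C = "insert Q (U ` D)"
  have "countable ?C" using D by simp
  moreover have "\<forall>C\<in>?C. openin X C" using Qo U DS by auto
  moreover have "S \<subseteq> \<Union>?C"
  proof
    fix x assume x: "x \<in> S"
    show "x \<in> \<Union>?C"
    proof (cases "x \<in> D")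
      case True then show ?thesis using U DS by blast
    next
      case False then show ?thesis using U x by (auto simp: Q_def)
    qed
  qed
  ultimately have C3: "countable ?C \<and> (\<forall>C\<in>?C. openin X C) \<and> S \<subseteq> \<Union>?C" by blast
  obtain F where F: "finite F" "F \<subseteq> ?C" "S \<subseteq> \<Union>F"
    using cc[unfolded countably_compactin_def, THEN conjunct2, rule_format, OF C3] by blast
  have "D \<subseteq> (\<Union>C\<in>F. C \<inter> D)"
  proof
    fix y assume "y \<in> D"
    then have "y \<in> \<Union>F" using F(3) DS by blast
    then obtain C where "C \<in> F" "y \<in> C" by blast
    then show "y \<in> (\<Union>C\<in>F. C \<inter> D)" using \<open>y \<in> D\<close> by blast
  qed
  moreover have "finite (\<Union>C\<in>F. C \<inter> D)"
  proof (rule finite_UN_I[OF F(1)])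
    fix C assume "C \<in> F"
    then have "C \<in> insert Q (U ` D)" using F(2) by blast
    then have "C = Q \<or> (\<exists>x\<in>D. C = U x)" by blast
    then show "finite (C \<inter> D)"
    proof
      assume "C = Q" then show ?thesis using QD by simp
    next
      assume "\<exists>x\<in>D. C = U x"
      then obtain x where "x \<in> D" "C = U x" by blast
      then have "C \<inter> D \<subseteq> {x}" using U DS by blast
      then show ?thesis using finite_subset by blast
    qed
  qed
  ultimately show False using D(3) finite_subset by blast
qed

lemma cc_metrizable_compact:
  assumes met: "metrizable_space (subtopology X H)" and cc: "countably_compactin X W" and WH: "W \<subseteq> H"
  shows "compactin X W"
proof -
  obtain M d where Md: "Metric_space M d" and eq: "subtopology X H = Metric_space.mtopology M d"
    using met metrizable_space_def by blast
  interpret Metric_space M d by fact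
  have MH: "M = topspace X \<inter> H" using eq topspace_mtopology by (metis topspace_subtopology)
  have Wtop: "W \<subseteq> topspace X" using cc by (simp add: countably_compactin_def)
  have "compactin mtopology W"
    unfolding compactin_eq_Bolzano_Weierstrass
  proof (intro conjI allI impI)
    show "W \<subseteq> M" using MH WH Wtop by blast
    fix T' assume T': "T' \<subseteq> W \<and> infinite T'"
    then have "W \<inter> X derived_set_of T' \<noteq> {}" using cc_BW[OF cc] by blast
    moreover have "mtopology derived_set_of T' = H \<inter> X derived_set_of T'"
    proof -
      have "H \<inter> T' = T'" using T' WH by blast
      then show ?thesis unfolding eq[symmetric] derived_set_of_subtopology by simp
    qed
    ultimately show "W \<inter> mtopology derived_set_of T' \<noteq> {}" using WH by blast
  qed
  then have "compactin (subtopology X H) W" using eq by simp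
  then show ?thesis by (simp add: compactin_subtopology)
qed

context group
begin

lemma tg_nbhd_sq:
  assumes tg: "topological_group G T" and Q: "openin T Q" "\<one>\<^bsub>G\<^esub> \<in> Q"
  shows "\<exists>E. openin T E \<and> \<one>\<^bsub>G\<^esub> \<in> E \<and>
     (\<forall>a\<in>E. \<forall>b\<in>E. inv\<^bsub>G\<^esub> a \<otimes>\<^bsub>G\<^esub> b \<in> Q \<and> a \<otimes>\<^bsub>G\<^esub> inv\<^bsub>G\<^esub> b \<in> Q)"
proof -
  have top: "topspace T = carrier G" using tg by (simp add: topological_group_def)
  have ci: "continuous_map T T (\<lambda>x. inv x)" and cm: "continuous_map (prod_topology T T) T (\<lambda>(x, y). x \<otimes> y)"
    using tg by (auto simp: topological_group_def)
  have c1: "continuous_map (prod_topology T T) T (\<lambda>p. inv (fst p) \<otimes> snd p)"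
  proof -
    have "continuous_map (prod_topology T T) (prod_topology T T) (\<lambda>p. (inv (fst p), snd p))"
      unfolding continuous_map_paired
      using continuous_map_compose[OF continuous_map_fst ci] continuous_map_snd[of T T]
      unfolding o_def by (intro conjI)
    hence "continuous_map (prod_topology T T) T ((\<lambda>(x,y). x \<otimes> y) \<circ> (\<lambda>p. (inv (fst p), snd p)))"
      by (rule continuous_map_compose[OF _ cm])
    thus ?thesis by (simp add: o_def case_prod_beta)
  qed
  have c2: "continuous_map (prod_topology T T) T (\<lambda>p. fst p \<otimes> inv (snd p))"
  proof -
    have "continuous_map (prod_topology T T) (prod_topology T T) (\<lambda>p. (fst p, inv (snd p)))"
      unfolding continuous_map_paired
      using continuous_map_compose[OF continuous_map_snd ci] continuous_map_fst[of T T]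
      unfolding o_def by (intro conjI)
    hence "continuous_map (prod_topology T T) T ((\<lambda>(x,y). x \<otimes> y) \<circ> (\<lambda>p. (fst p, inv (snd p))))"
      by (rule continuous_map_compose[OF _ cm])
    thus ?thesis by (simp add: o_def case_prod_beta)
  qed
  define P where "P = {p \<in> topspace (prod_topology T T). inv (fst p) \<otimes> snd p \<in> Q}
     \<inter> {p \<in> topspace (prod_topology T T). fst p \<otimes> inv (snd p) \<in> Q}"
  have "openin (prod_topology T T) P" unfolding P_def
    using openin_continuous_map_preimage[OF c1 Q(1)] openin_continuous_map_preimage[OF c2 Q(1)]
    by (rule openin_Int)
  moreover have "(\<one>, \<one>) \<in> P" using Q(2) top by (simp add: P_def)
  ultimately obtain A B where "openin T A" "openin T B" "\<one> \<in> A" "\<one> \<in> B" "A \<times> B \<subseteq> P"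
    using openin_prod_topology_alt[THEN iffD1, rule_format] by metis
  note AB = this
  have "\<forall>a\<in>A\<inter>B. \<forall>b\<in>A\<inter>B. inv a \<otimes> b \<in> Q \<and> a \<otimes> inv b \<in> Q"
  proof (intro ballI)
    fix a b assume "a \<in> A \<inter> B" "b \<in> A \<inter> B"
    then have "(a, b) \<in> P" using AB(5) by blast
    then show "inv a \<otimes> b \<in> Q \<and> a \<otimes> inv b \<in> Q" by (simp add: P_def)
  qed
  then show ?thesis using AB(1-4) by (metis IntI openin_Int)
qed


lemma open_compact_subgroup:
  assumes tg: "topological_group G T" and sub: "subgroup H G"
    and KH: "K \<subseteq> H" and Ko: "openin (subtopology T H) K" and Kc: "compactin T K"
    and one: "\<one> \<in> K"
  shows "\<exists>S. subgroup S G \<and> S \<subseteq> K \<and> openin (subtopology T H) S \<and> compactin T S"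
proof -
  have top: "topspace T = carrier G" using tg by (simp add: topological_group_def)
  have ci: "continuous_map T T (\<lambda>x. inv x)" and cm: "continuous_map (prod_topology T T) T (\<lambda>(x, y). x \<otimes> y)"
    using tg by (auto simp: topological_group_def)
  have Hc: "H \<subseteq> carrier G" using subgroup.subset[OF sub] by blast
  have Kc': "K \<subseteq> carrier G" using KH Hc by blast
  obtain Q where Qo: "openin T Q" and KQ: "K = Q \<inter> H" using Ko by (auto simp: openin_subtopology)
  define P where "P = {p \<in> topspace (prod_topology T T). (\<lambda>(x,y). x \<otimes> y) p \<in> Q}"
  have Po: "openin (prod_topology T T) P" unfolding P_def
    by (rule openin_continuous_map_preimage[OF cm Qo])
  have "\<exists>A B. openin T A \<and> openin T B \<and> k \<in> A \<and> \<one> \<in> B \<and> A \<times> B \<subseteq> P" if k: "k \<in> K" for k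
  proof -
    have "(k, \<one>) \<in> P" using k KQ Kc' top by (auto simp: P_def)
    then show ?thesis using Po openin_prod_topology_alt[THEN iffD1, rule_format] by metis
  qed
  then obtain A B where AB: "\<And>k. k \<in> K \<Longrightarrow> openin T (A k) \<and> openin T (B k) \<and> k \<in> A k \<and> \<one> \<in> B k \<and> A k \<times> B k \<subseteq> P"
    by metis
  have "\<exists>\<F>. finite \<F> \<and> \<F> \<subseteq> A ` K \<and> K \<subseteq> \<Union>\<F>"
  proof -
    have "(\<forall>U\<in>A ` K. openin T U) \<and> K \<subseteq> \<Union>(A ` K)" using AB by blast
    then show ?thesis using Kc unfolding compactin_def by blast
  qed
  then obtain J where J: "J \<subseteq> K" "finite J" "K \<subseteq> \<Union>(A ` J)"
    by (metis finite_subset_image)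
  define V where "V = (\<Inter>k\<in>J. B k) \<inter> topspace T"
  have Vo: "openin T V" unfolding V_def using J AB by (intro openin_INT) auto
  have oneV: "\<one> \<in> V" using J AB top by (auto simp: V_def)
  have KV: "k \<otimes> v \<in> K" if kv: "k \<in> K" "v \<in> V" "v \<in> H" for k v
  proof -
    obtain j where j: "j \<in> J" "k \<in> A j" using J kv by blast
    have "v \<in> B j" using j kv by (auto simp: V_def)
    then have "(k, v) \<in> P" using AB[of j] j J by blast
    then have "k \<otimes> v \<in> Q" by (simp add: P_def)
    moreover have "k \<otimes> v \<in> H" using KH kv subgroup.m_closed[OF sub] by blast
    ultimately show ?thesis using KQ by blast
  qed
  define N where "N = V \<inter> {x \<in> topspace T. inv x \<in> V}"
  have No: "openin T N" unfolding N_def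
    using Vo openin_continuous_map_preimage[OF ci Vo] by (rule openin_Int)
  have oneN: "\<one> \<in> N" using oneV top by (simp add: N_def)
  define S where "S = {x \<in> H. (\<forall>k\<in>K. k \<otimes> x \<in> K) \<and> (\<forall>k\<in>K. k \<otimes> inv x \<in> K)}"
  have SH: "S \<subseteq> H" by (auto simp: S_def)
  have NS: "N \<inter> H \<subseteq> S"
  proof
    fix x assume x: "x \<in> N \<inter> H"
    then have "inv x \<in> H" using subgroup.m_inv_closed[OF sub] by blast
    then show "x \<in> S" using x KV by (auto simp: S_def N_def)
  qed
  have subS: "subgroup S G"
  proof (rule subgroup.intro)
    show "S \<subseteq> carrier G" using SH Hc by blast
  next
    fix x y assume x: "x \<in> S" and y: "y \<in> S"
    have xc: "x \<in> carrier G" and yc: "y \<in> carrier G" using x y SH Hc by auto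
    have "x \<otimes> y \<in> H" using x y SH subgroup.m_closed[OF sub] by blast
    moreover have "k \<otimes> (x \<otimes> y) \<in> K" if k: "k \<in> K" for k
    proof -
      have "k \<otimes> x \<in> K" using x k by (simp add: S_def)
      then have "(k \<otimes> x) \<otimes> y \<in> K" using y by (simp add: S_def)
      moreover have "k \<in> carrier G" using k Kc' by blast
      ultimately show ?thesis using xc yc by (simp add: m_assoc)
    qed
    moreover have "k \<otimes> inv (x \<otimes> y) \<in> K" if k: "k \<in> K" for k
    proof -
      have "k \<otimes> inv y \<in> K" using y k by (simp add: S_def)
      then have "(k \<otimes> inv y) \<otimes> inv x \<in> K" using x by (simp add: S_def)
      moreover have "k \<in> carrier G" using k Kc' by blast
      ultimately show ?thesis using xc yc by (simp add: m_assoc inv_mult_group)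
    qed
    ultimately show "x \<otimes> y \<in> S" by (simp add: S_def)
  next
    show "\<one> \<in> S" using subgroup.one_closed[OF sub] Kc' by (fastforce simp: S_def)
  next
    fix x assume x: "x \<in> S"
    have xc: "x \<in> carrier G" using x SH Hc by auto
    have "inv x \<in> H" using x SH subgroup.m_inv_closed[OF sub] by blast
    then show "inv x \<in> S" using x xc by (auto simp: S_def)
  qed
  have SK: "S \<subseteq> K"
  proof
    fix x assume x: "x \<in> S"
    have xc: "x \<in> carrier G" using x SH Hc by auto
    have "\<one> \<otimes> x \<in> K" using x one by (simp add: S_def)
    then show "x \<in> K" using xc by simp
  qed
  have transl: "openin (subtopology T H) ({y \<in> topspace T. inv a \<otimes> y \<in> N} \<inter> H)" if "a \<in> H" for a
  proof -
    have "inv a \<in> carrier G" using that Hc by auto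
    then show ?thesis using tg_transl_open[OF tg _ No] openin_subtopology_Int by blast
  qed
  have So: "openin (subtopology T H) S"
  proof (subst openin_subopen, intro ballI)
    fix s assume s: "s \<in> S"
    have sc: "s \<in> carrier G" and sH: "s \<in> H" using s SH Hc by auto
    define Ts where "Ts = {y \<in> topspace T. inv s \<otimes> y \<in> N} \<inter> H"
    have "openin (subtopology T H) Ts" unfolding Ts_def using transl sH by blast
    moreover have "s \<in> Ts" using sc sH oneN top by (simp add: Ts_def)
    moreover have "Ts \<subseteq> S"
    proof
      fix y assume y: "y \<in> Ts"
      then have yH: "y \<in> H" and yc: "y \<in> carrier G" and yN: "inv s \<otimes> y \<in> N" using Hc by (auto simp: Ts_def)
      have "inv s \<otimes> y \<in> H" using yH sH subgroup.m_closed[OF sub] subgroup.m_inv_closed[OF sub] by metis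
      then have z: "inv s \<otimes> y \<in> S" using yN NS by blast
      have "s \<otimes> (inv s \<otimes> y) = y" using sc yc by (simp add: m_assoc[symmetric])
      moreover have "s \<otimes> (inv s \<otimes> y) \<in> S" using s z subgroup.m_closed[OF subS] by blast
      ultimately show "y \<in> S" by simp
    qed
    ultimately show "\<exists>T'. openin (subtopology T H) T' \<and> s \<in> T' \<and> T' \<subseteq> S" by blast
  qed
  have Scl: "closedin (subtopology T H) S"
  proof -
    have "openin (subtopology T H) (H - S)"
    proof (subst openin_subopen, intro ballI)
      fix h assume h: "h \<in> H - S"
      have hc: "h \<in> carrier G" and hH: "h \<in> H" using h Hc by auto
      define Ts where "Ts = {y \<in> topspace T. inv h \<otimes> y \<in> N} \<inter> H"
      have "openin (subtopology T H) Ts" unfolding Ts_def using transl hH by blast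
      moreover have "h \<in> Ts" using hc hH oneN top by (simp add: Ts_def)
      moreover have "Ts \<subseteq> H - S"
      proof
        fix y assume y: "y \<in> Ts"
        then have yH: "y \<in> H" and yc: "y \<in> carrier G" and yN: "inv h \<otimes> y \<in> N" using Hc by (auto simp: Ts_def)
        have "inv h \<otimes> y \<in> H" using yH hH subgroup.m_closed[OF sub] subgroup.m_inv_closed[OF sub] by metis
        then have z: "inv h \<otimes> y \<in> S" using yN NS by blast
        show "y \<in> H - S"
        proof
          show "y \<in> H" by fact
          show "y \<notin> S"
          proof
            assume yS: "y \<in> S"
            have "y \<otimes> inv (inv h \<otimes> y) = h" using hc yc by (simp add: inv_mult_group m_assoc[symmetric])
            moreover have "y \<otimes> inv (inv h \<otimes> y) \<in> S" using yS z subgroup.m_closed[OF subS] subgroup.m_inv_closed[OF subS] by metis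
            ultimately show False using h by simp
          qed
        qed
      qed
      ultimately show "\<exists>T'. openin (subtopology T H) T' \<and> h \<in> T' \<and> T' \<subseteq> H - S" by blast
    qed
    moreover have "topspace (subtopology T H) = H" using Hc top by auto
    ultimately show ?thesis using SH by (simp add: closedin_def)
  qed
  have "compactin (subtopology T H) K" using Kc KH by (simp add: compactin_subtopology)
  then have "compactin (subtopology T H) S" by (rule closed_compactin[OF _ SK Scl])
  then have "compactin T S" by (simp add: compactin_subtopology)
  then show ?thesis using subS SK So by blast
qed

lemma finite_open_subgroup_discrete:
  assumes tg: "topological_group G T" and sub: "subgroup H G"
    and SH: "S \<subseteq> H" and fin: "finite S" and So: "openin (subtopology T H) S" and one: "\<one> \<in> S"
  shows "subtopology T H = discrete_topology H"
proof -
  have top: "topspace T = carrier G" using tg by (simp add: topological_group_def)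
  have Hc: "H \<subseteq> carrier G" using subgroup.subset[OF sub] by blast
  have tsp: "topspace (subtopology T H) = H" using Hc top by auto
  have "Hausdorff_space T" using tg by (simp add: topological_group_def)
  then have "t1_space (subtopology T H)" by (intro Hausdorff_imp_t1_space Hausdorff_space_subtopology)
  moreover have "finite (S - {\<one>}) \<and> S - {\<one>} \<subseteq> topspace (subtopology T H)" using fin SH tsp by auto
  ultimately have "closedin (subtopology T H) (S - {\<one>})" using t1_space_closedin_finite[THEN iffD1, rule_format] by blast
  then have "openin (subtopology T H) (S - (S - {\<one>}))" using So by (intro openin_diff)
  moreover have "S - (S - {\<one>}) = {\<one>}" using one by blast
  ultimately have "openin (subtopology T H) {\<one>}" by simp
  then obtain Q where Qo: "openin T Q" and Q1: "{\<one>} = Q \<inter> H" by (auto simp: openin_subtopology)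
  have "openin (subtopology T H) {h}" if hH: "h \<in> H" for h
  proof -
    have hc: "h \<in> carrier G" using hH Hc by auto
    have "{h} = {y \<in> topspace T. inv h \<otimes> y \<in> Q} \<inter> H"
    proof
      show "{h} \<subseteq> {y \<in> topspace T. inv h \<otimes> y \<in> Q} \<inter> H" using hc hH Q1 top by auto
      show "{y \<in> topspace T. inv h \<otimes> y \<in> Q} \<inter> H \<subseteq> {h}"
      proof
        fix y assume y: "y \<in> {y \<in> topspace T. inv h \<otimes> y \<in> Q} \<inter> H"
        then have yc: "y \<in> carrier G" and yH: "y \<in> H" using Hc by auto
        have "inv h \<otimes> y \<in> H" using yH hH subgroup.m_closed[OF sub] subgroup.m_inv_closed[OF sub] by metis
        then have "inv h \<otimes> y = \<one>" using y Q1 by blast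
        then have "h \<otimes> (inv h \<otimes> y) = h" using hc by simp
        then show "y \<in> {h}" using hc yc by (simp add: m_assoc[symmetric])
      qed
    qed
    moreover have "inv h \<in> carrier G" using hc by simp
    ultimately show ?thesis using tg_transl_open[OF tg _ Qo] openin_subtopology_Int by metis
  qed
  then have "discrete_topology H = subtopology T H"
    using discrete_topology_unique[of H "subtopology T H", THEN iffD2] tsp by blast
  then show ?thesis by simp
qed


lemma alg1:
  assumes "x \<in> carrier G" "y \<in> carrier G" "f \<in> carrier G"
  shows "inv (inv f \<otimes> x) \<otimes> (inv f \<otimes> y) = inv x \<otimes> y"
proof -
  have e: "f \<otimes> (inv f \<otimes> y) = y" using assms by (simp add: m_assoc[symmetric])
  have "inv (inv f \<otimes> x) \<otimes> (inv f \<otimes> y) = (inv x \<otimes> f) \<otimes> (inv f \<otimes> y)"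
    using assms by (simp add: inv_mult_group)
  also have "\<dots> = inv x \<otimes> (f \<otimes> (inv f \<otimes> y))" using assms by (simp add: m_assoc)
  also have "\<dots> = inv x \<otimes> y" using e by simp
  finally show ?thesis .
qed

lemma alg2:
  assumes "x \<in> carrier G" "y \<in> carrier G" "f \<in> carrier G"
  shows "(y \<otimes> inv f) \<otimes> inv (x \<otimes> inv f) = y \<otimes> inv x"
proof -
  have e: "inv f \<otimes> (f \<otimes> inv x) = inv x" using assms by (simp add: m_assoc[symmetric])
  have "(y \<otimes> inv f) \<otimes> inv (x \<otimes> inv f) = (y \<otimes> inv f) \<otimes> (f \<otimes> inv x)"
    using assms by (simp add: inv_mult_group)
  also have "\<dots> = y \<otimes> (inv f \<otimes> (f \<otimes> inv x))" using assms by (simp add: m_assoc)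
  also have "\<dots> = y \<otimes> inv x" using e by simp
  finally show ?thesis .
qed

lemma precompact_seq_compact:
  assumes tg: "topological_group G T" and sub: "subgroup H G"
    and met: "metrizable_space (subtopology T H)" and sc: "sequentially_complete G T"
    and WH: "W \<subseteq> H" and pc: "precompact_in G T W" and Wcl: "closedin T W"
  shows "compactin T W"
proof -
  have top: "topspace T = carrier G" using tg by (simp add: topological_group_def)
  have Hc: "H \<subseteq> carrier G" using subgroup.subset[OF sub] .
  have oneH: "\<one> \<in> H" using subgroup.one_closed[OF sub] .
  obtain M d where Md: "Metric_space M d" and eq: "subtopology T H = Metric_space.mtopology M d"
    using met metrizable_space_def by blast
  interpret Metric_space M d by fact
  have MH: "M = H" using eq topspace_mtopology Hc top by (metis topspace_subtopology inf.absorb2)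
  have "\<exists>Q. openin T Q \<and> mball \<one> (inverse (Suc n)) = Q \<inter> H" for n :: nat
  proof -
    have "openin (subtopology T H) (mball \<one> (inverse (Suc n)))" unfolding eq by simp
    then show ?thesis by (auto simp: openin_subtopology)
  qed
  then obtain Qs where Qs: "\<And>n. openin T (Qs n)" "\<And>n. mball \<one> (inverse (Suc n)) = Qs n \<inter> H" by metis
  have oneQ: "\<one> \<in> Qs n" for n
  proof -
    have "\<one> \<in> M" using oneH MH by simp
    then have "\<one> \<in> mball \<one> (inverse (Suc n))" by simp
    then show ?thesis using Qs(2)[of n] by blast
  qed
  have base: "\<exists>n. Qs n \<inter> H \<subseteq> V" if V: "openin T V" "\<one> \<in> V" for V
  proof -
    have "openin (subtopology T H) (V \<inter> H)" using V(1) by (simp add: openin_subtopology_Int)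
    then have "openin mtopology (V \<inter> H)" unfolding eq .
    then have "\<forall>x. x \<in> V \<inter> H \<longrightarrow> (\<exists>r>0. mball x r \<subseteq> V \<inter> H)"
      unfolding openin_mtopology by (rule conjunct2)
    moreover have "\<one> \<in> V \<inter> H" using V(2) oneH by blast
    ultimately obtain r where r: "r > 0" "mball \<one> r \<subseteq> V \<inter> H" by blast
    obtain n where n: "inverse (real (Suc n)) < r" using reals_Archimedean[OF r(1)] by blast
    then have "mball \<one> (inverse (Suc n)) \<subseteq> mball \<one> r" by (intro mball_subset_concentric) simp
    then have "Qs n \<inter> H \<subseteq> V" using Qs(2)[of n] r(2) by blast
    then show ?thesis by blast
  qed
  have "\<forall>n. \<exists>E. openin T E \<and> \<one> \<in> E \<and> (\<forall>a\<in>E. \<forall>b\<in>E. inv a \<otimes> b \<in> Qs n \<and> a \<otimes> inv b \<in> Qs n)"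
    using tg_nbhd_sq[OF tg Qs(1) oneQ] by blast
  then obtain E where E0: "\<forall>n. openin T (E n) \<and> \<one> \<in> E n \<and> (\<forall>a\<in>E n. \<forall>b\<in>E n. inv a \<otimes> b \<in> Qs n \<and> a \<otimes> inv b \<in> Qs n)"
    by (rule choice[THEN exE])
  have E: "\<And>n. openin T (E n)" "\<And>n. \<one> \<in> E n"
    "\<And>n a b. a \<in> E n \<Longrightarrow> b \<in> E n \<Longrightarrow> inv a \<otimes> b \<in> Qs n \<and> a \<otimes> inv b \<in> Qs n"
    using E0 by auto
  have "compactin mtopology W"
    unfolding compactin_sequentially
  proof (intro conjI allI impI)
    show "W \<subseteq> M" using WH MH by simp
    fix \<sigma> :: "nat \<Rightarrow> 'a" assume \<sigma>: "range \<sigma> \<subseteq> W"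
    define P where "P n s \<longleftrightarrow> (\<exists>f\<in>carrier G. \<forall>i. \<sigma> (s i) \<in> two_sided_ball G (E n) f)"
      for n and s :: "nat \<Rightarrow> nat"
    have ex: "\<exists>r'. strict_mono r' \<and> P n (s \<circ> r')" for n and s :: "nat \<Rightarrow> nat"
    proof -
      have En: "openin T (E n) \<and> \<one> \<in> E n" using E(1,2) by blast
      obtain F where F: "finite F" "F \<subseteq> carrier G" "W \<subseteq> (\<Union>f\<in>F. two_sided_ball G (E n) f)"
        using pc[unfolded precompact_in_def, THEN conjunct2, rule_format, OF En] by blast
      have Ueq: "UNIV = (\<Union>f\<in>F. {i. \<sigma> (s i) \<in> two_sided_ball G (E n) f})"
      proof -
        have "i \<in> (\<Union>f\<in>F. {i. \<sigma> (s i) \<in> two_sided_ball G (E n) f})" for i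
        proof -
          have "\<sigma> (s i) \<in> W" using \<sigma> by (simp add: image_subset_iff)
          then obtain f where "f \<in> F" "\<sigma> (s i) \<in> two_sided_ball G (E n) f" using F(3) by blast
          then show ?thesis by blast
        qed
        then show ?thesis by blast
      qed
      have "\<exists>f\<in>F. infinite {i. \<sigma> (s i) \<in> two_sided_ball G (E n) f}"
      proof (rule ccontr)
        assume "\<not> (\<exists>f\<in>F. infinite {i. \<sigma> (s i) \<in> two_sided_ball G (E n) f})"
        then have "finite (\<Union>f\<in>F. {i. \<sigma> (s i) \<in> two_sided_ball G (E n) f})" using F(1) by simp
        then show False unfolding Ueq[symmetric] by simp
      qed
      then obtain f where f: "f \<in> F" "infinite {i. \<sigma> (s i) \<in> two_sided_ball G (E n) f}" by blast
      then obtain r :: "nat \<Rightarrow> nat" where r: "strict_mono r" "\<forall>i. r i \<in> {i. \<sigma> (s i) \<in> two_sided_ball G (E n) f}"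
        using infinite_enumerate[OF f(2)] by blast
      have "\<forall>i. \<sigma> ((s \<circ> r) i) \<in> two_sided_ball G (E n) f" using r(2) by simp
      moreover have "f \<in> carrier G" using f(1) F(2) by blast
      ultimately have "P n (s \<circ> r)" unfolding P_def by blast
      then show ?thesis using r(1) by blast
    qed
    interpret ss: subseqs P by unfold_locales (rule ex)
    have stable: "\<And>r s n. strict_mono r \<Longrightarrow> P n s \<Longrightarrow> P n (s \<circ> r)" by (auto simp: P_def)
    define \<delta> where "\<delta> = ss.diagseq"
    have hold: "P k (\<delta> \<circ> (+) (Suc k))" for k unfolding \<delta>_def by (rule ss.diagseq_holds[OF stable])
    have sm: "strict_mono \<delta>" unfolding \<delta>_def by (rule ss.subseq_diagseq)
    have cauchy: "two_sided_cauchy G T (\<sigma> \<circ> \<delta>)"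
      unfolding two_sided_cauchy_def
    proof (intro conjI allI impI)
      show "(\<sigma> \<circ> \<delta>) n \<in> carrier G" for n using \<sigma> WH Hc by auto
      fix V assume V: "openin T V \<and> \<one> \<in> V"
      obtain n where n: "Qs n \<inter> H \<subseteq> V" using base V by blast
      obtain f where f: "f \<in> carrier G" "\<And>i. \<sigma> (\<delta> (Suc n + i)) \<in> two_sided_ball G (E n) f"
        using hold[of n] by (auto simp: P_def)
      have inb: "\<sigma> (\<delta> m) \<in> two_sided_ball G (E n) f" if "m \<ge> Suc n" for m
        using f(2)[of "m - Suc n"] that by simp
      show "\<exists>N. \<forall>m\<ge>N. \<forall>k\<ge>N. (\<sigma> \<circ> \<delta>) k \<in> two_sided_ball G V ((\<sigma> \<circ> \<delta>) m)"
      proof (intro exI[of _ "Suc n"] allI impI)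
        fix m k assume m: "Suc n \<le> m" and k: "Suc n \<le> k"
        define x where "x = \<sigma> (\<delta> m)"
        define y where "y = \<sigma> (\<delta> k)"
        have xH: "x \<in> H" and yH: "y \<in> H" using \<sigma> WH by (auto simp: x_def y_def)
        then have xc: "x \<in> carrier G" and yc: "y \<in> carrier G" using Hc by auto
        have bx: "inv f \<otimes> x \<in> E n" "x \<otimes> inv f \<in> E n"
          using inb[OF m] by (auto simp: two_sided_ball_def x_def)
        have bY: "inv f \<otimes> y \<in> E n" "y \<otimes> inv f \<in> E n"
          using inb[OF k] by (auto simp: two_sided_ball_def y_def)
        have "inv (inv f \<otimes> x) \<otimes> (inv f \<otimes> y) \<in> Qs n" using E(3)[OF bx(1) bY(1)] by blast
        then have 1: "inv x \<otimes> y \<in> Qs n" using alg1[OF xc yc f(1)] by simp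
        have "(y \<otimes> inv f) \<otimes> inv (x \<otimes> inv f) \<in> Qs n" using E(3)[OF bY(2) bx(2)] by blast
        then have 2: "y \<otimes> inv x \<in> Qs n" using alg2[OF xc yc f(1)] by simp
        have ixH: "inv x \<in> H" using subgroup.m_inv_closed[OF sub xH] .
        have h1: "inv x \<otimes> y \<in> H" using subgroup.m_closed[OF sub ixH yH] .
        have h2: "y \<otimes> inv x \<in> H" using subgroup.m_closed[OF sub yH ixH] .
        have v1: "inv x \<otimes> y \<in> V" using 1 h1 n by blast
        have v2: "y \<otimes> inv x \<in> V" using 2 h2 n by blast
        have "y \<in> two_sided_ball G V x" unfolding two_sided_ball_def using yc v1 v2 by blast
        then show "(\<sigma> \<circ> \<delta>) k \<in> two_sided_ball G V ((\<sigma> \<circ> \<delta>) m)"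
          unfolding x_def y_def by simp
      qed
    qed
    obtain l where l: "limitin T (\<sigma> \<circ> \<delta>) l sequentially"
      using sc cauchy unfolding sequentially_complete_def by blast
    have ev: "eventually (\<lambda>x. (\<sigma> \<circ> \<delta>) x \<in> W) sequentially"
      by (rule always_eventually) (use \<sigma> in auto)
    have lW: "l \<in> W"
      by (rule limitin_closedin[OF l Wcl ev]) simp
    have evH: "eventually (\<lambda>a. (\<sigma> \<circ> \<delta>) a \<in> H) sequentially"
      by (rule always_eventually) (use \<sigma> WH in auto)
    have lH: "l \<in> H" using lW WH by blast
    have "limitin mtopology (\<sigma> \<circ> \<delta>) l sequentially"
      unfolding eq[symmetric] limitin_subtopology using lH evH l by blast
    then show "\<exists>l r. l \<in> W \<and> strict_mono r \<and> limitin mtopology (\<sigma> \<circ> r) l sequentially"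
      using lW sm by blast
  qed
  then have "compactin (subtopology T H) W" using eq by simp
  then show ?thesis by (simp add: compactin_subtopology)
qed

lemma discrete_from_compact_nbhd:
  assumes tg: "topological_group G T" and sub: "subgroup H G"
    and zd: "zero_dimensional (subtopology T H)" and met: "metrizable_space (subtopology T H)"
    and fin: "compact_zd_metrizable_subgroups_finite G T"
    and Wo: "openin (subtopology T H) W" and W1: "\<one> \<in> W" and Wc: "compactin T W"
  shows "subtopology T H = discrete_topology H"
proof -
  have WH: "W \<subseteq> H" using openin_subset[OF Wo] by auto
  obtain S where S: "subgroup S G" "S \<subseteq> W" "openin (subtopology T H) S" "compactin T S"
    using open_compact_subgroup[OF tg sub WH Wo Wc W1] by blast
  have SH: "S \<subseteq> H" using S(2) WH by blast
  have eqS: "subtopology (subtopology T H) S = subtopology T S"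
    using SH by (simp add: subtopology_subtopology Int_absorb1 Int_absorb2)
  have "zero_dimensional (subtopology T S)" using zd_subtopology[OF zd, of S] eqS by simp
  moreover have "metrizable_space (subtopology T S)" using metrizable_space_subtopology[OF met, of S] eqS by simp
  ultimately have "finite S" using fin S(1,4) unfolding compact_zd_metrizable_subgroups_finite_def by blast
  moreover have "\<one> \<in> S" using subgroup.one_closed[OF S(1)] .
  ultimately show ?thesis using finite_open_subgroup_discrete[OF tg sub SH _ S(3)] by blast
qed

lemma part1:
  assumes tg: "topological_group G T" and lp: "locally_precompact G T" and sc: "sequentially_complete G T"
    and fin: "compact_zd_metrizable_subgroups_finite G T"
  shows "closed_zd_metrizable_subgroups_discrete G T"
  unfolding closed_zd_metrizable_subgroups_discrete_def
proof (intro allI impI)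
  fix H assume H: "subgroup H G \<and> closedin T H \<and> zero_dimensional (subtopology T H) \<and> metrizable_space (subtopology T H)"
  then have sub: "subgroup H G" and Hcl: "closedin T H" and zd: "zero_dimensional (subtopology T H)"
    and met: "metrizable_space (subtopology T H)" by auto
  obtain U where U: "openin T U" "\<one> \<in> U" "precompact_in G T U"
    using lp unfolding locally_precompact_def by blast
  have "openin (subtopology T H) (U \<inter> H)" using U(1) by (simp add: openin_subtopology_Int)
  moreover have "\<one> \<in> U \<inter> H" using U(2) subgroup.one_closed[OF sub] by blast
  ultimately have UH: "openin (subtopology T H) (U \<inter> H) \<and> \<one> \<in> U \<inter> H" by blast
  obtain W where W: "openin (subtopology T H) W" "closedin (subtopology T H) W" "\<one> \<in> W" "W \<subseteq> U \<inter> H"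
    using zd[unfolded zero_dimensional_def, rule_format, OF UH] by blast
  have WclT: "closedin T W" using closedin_trans_full[OF W(2) Hcl] .
  have pcW: "precompact_in G T W"
    unfolding precompact_in_def
  proof (intro conjI allI impI)
    show "W \<subseteq> carrier G" using W(4) subgroup.subset[OF sub] by blast
    fix V assume V: "openin T V \<and> \<one> \<in> V"
    then obtain F where "finite F" "F \<subseteq> carrier G" "U \<subseteq> (\<Union>f\<in>F. two_sided_ball G V f)"
      using U(3)[unfolded precompact_in_def, THEN conjunct2, rule_format, OF V] by blast
    then show "\<exists>F. finite F \<and> F \<subseteq> carrier G \<and> W \<subseteq> (\<Union>f\<in>F. two_sided_ball G V f)"
      using W(4) by blast
  qed
  have "compactin T W" using precompact_seq_compact[OF tg sub met sc _ pcW WclT] W(4) by blast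
  then show "subtopology T H = discrete_topology H"
    using discrete_from_compact_nbhd[OF tg sub zd met fin W(1) W(3)] by blast
qed

lemma part2:
  assumes tg: "topological_group G T" and lc: "locally_countably_compact G T"
    and fin: "compact_zd_metrizable_subgroups_finite G T"
  shows "closed_zd_metrizable_subgroups_discrete G T"
  unfolding closed_zd_metrizable_subgroups_discrete_def
proof (intro allI impI)
  fix H assume H: "subgroup H G \<and> closedin T H \<and> zero_dimensional (subtopology T H) \<and> metrizable_space (subtopology T H)"
  then have sub: "subgroup H G" and Hcl: "closedin T H" and zd: "zero_dimensional (subtopology T H)"
    and met: "metrizable_space (subtopology T H)" by auto
  obtain U where U: "openin T U" "\<one> \<in> U" "countably_compactin T (T closure_of U)"
    using lc unfolding locally_countably_compact_def by blast
  have "openin (subtopology T H) (U \<inter> H)" using U(1) by (simp add: openin_subtopology_Int)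
  moreover have "\<one> \<in> U \<inter> H" using U(2) subgroup.one_closed[OF sub] by blast
  ultimately have UH: "openin (subtopology T H) (U \<inter> H) \<and> \<one> \<in> U \<inter> H" by blast
  obtain W where W: "openin (subtopology T H) W" "closedin (subtopology T H) W" "\<one> \<in> W" "W \<subseteq> U \<inter> H"
    using zd[unfolded zero_dimensional_def, rule_format, OF UH] by blast
  have WclT: "closedin T W" using closedin_trans_full[OF W(2) Hcl] .
  have "U \<subseteq> T closure_of U" using U(1) openin_subset closure_of_subset by metis
  then have "W \<subseteq> T closure_of U" using W(4) by blast
  then have "countably_compactin T W" using cc_closed_subset[OF U(3) WclT] by blast
  then have "compactin T W" using cc_metrizable_compact[OF met _ ] W(4) by blast
  then show "subtopology T H = discrete_topology H"
    using discrete_from_compact_nbhd[OF tg sub zd met fin W(1) W(3)] by blast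
qed

end

theorem proposition2p15:
  shows "(\<forall>(G :: ('a, 'b) monoid_scheme) (T :: 'a topology).
            topological_group G T \<and> locally_precompact G T \<and> sequentially_complete G T
            \<longrightarrow> (closed_zd_metrizable_subgroups_discrete G T \<longleftrightarrow>
                 compact_zd_metrizable_subgroups_finite G T))
       \<and> (\<forall>(G :: ('a, 'b) monoid_scheme) (T :: 'a topology).
            topological_group G T \<and> locally_countably_compact G T
            \<longrightarrow> (closed_zd_metrizable_subgroups_discrete G T \<longleftrightarrow>
                 compact_zd_metrizable_subgroups_finite G T))"
proof (intro conjI allI impI)
  fix G :: "('a, 'b) monoid_scheme" and T :: "'a topology"
  assume A: "topological_group G T \<and> locally_precompact G T \<and> sequentially_complete G T"
  then have grp: "group G" by (simp add: topological_group_def)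
  show "closed_zd_metrizable_subgroups_discrete G T \<longleftrightarrow> compact_zd_metrizable_subgroups_finite G T"
    using easy_dir[of G T] group.part1[OF grp, of T] A by blast
next
  fix G :: "('a, 'b) monoid_scheme" and T :: "'a topology"
  assume A: "topological_group G T \<and> locally_countably_compact G T"
  then have grp: "group G" by (simp add: topological_group_def)
  show "closed_zd_metrizable_subgroups_discrete G T \<longleftrightarrow> compact_zd_metrizable_subgroups_finite G T"
    using easy_dir[of G T] group.part2[OF grp, of T] A by blast
qed

end
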